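(* Let $G$ be a looped simple graph and $k_1,k_2$ positive integers. The following are equivalent: (1) $G$ is locally equivalent to some looped simple graph $H$ having two distinct nonadjacent vertices of degrees $k_1-1$ and $k_2-1$ with no common neighbor; (2) some transverse matroid of $G$ has two disjoint circuits of sizes $k_1$ and $k_2$ whose union contains no other circuit.
   Context: A looped simple graph is a finite graph in which each vertex carries at most one loop and no two distinct vertices are joined by more than one edge. "Adjacent"/"neighbors" refer only to distinct vertices joined by a non-loop edge; the degree of a vertex is its number of neighbors (loops not counted). $A(G)$ is the $V(G)\times V(G)$ matrix over $GF(2)$ with diagonal entry $1$ exactly at looped vertices and off-diagonal entry $1$ exactly for adjacent pairs. $IAS(G)=(I\mid A(G)\mid A(G)+I)$ over $GF(2)$, rows indexed by $V(G)$; the $v$-columns of the three blocks are labelled $\phi_G(v),\chi_G(v),\psi_G(v)$. $M[IAS(G)]$ is the binary column matroid of $IAS(G)$ on $W(G)=\{\phi_G(v),\chi_G(v),\psi_G(v):v\in V(G)\}$. A transversal contains exactly one element of each vertex triple $\{\phi_G(v),\chi_G(v),\psi_G(v)\}$; a transverse matroid of $G$ is the restriction of $M[IAS(G)]$ to a transversal. Local equivalence: $G_\ell^v$ complements the loop status of $v$; $G_s^v$ complements the adjacency status of every pair of distinct neighbors of $v$; $G_{ns}^v$ does this and also complements the loop status of every neighbor of $v$. $H$ is locally equivalent to $G$ if obtained from $G$ by a finite sequence of such operations. *)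

theory Defs
  imports Main "HOL-Library.Z2"
begin

text \<open>A looped simple graph is represented by a finite vertex set V and a symmetric
  relation A on V: for distinct u, v, A u v means u and v are adjacent; A v v means
  v carries a loop.  So A is exactly the adjacency matrix A(G) over GF(2).\<close>

definition looped_simple_graph :: "'a set \<Rightarrow> ('a \<Rightarrow> 'a \<Rightarrow> bool) \<Rightarrow> bool" where
  "looped_simple_graph V A \<longleftrightarrow> finite V \<and> (\<forall>u v. A u v = A v u) \<and>
     (\<forall>u v. A u v \<longrightarrow> u \<in> V \<and> v \<in> V)"

definition adjacent :: "('a \<Rightarrow> 'a \<Rightarrow> bool) \<Rightarrow> 'a \<Rightarrow> 'a \<Rightarrow> bool" where
  "adjacent A u v \<longleftrightarrow> u \<noteq> v \<and> A u v"

definition degree :: "('a \<Rightarrow> 'a \<Rightarrow> bool) \<Rightarrow> 'a \<Rightarrow> nat" where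
  "degree A v = card {u. adjacent A v u}"

definition loop_compl :: "'a \<Rightarrow> ('a \<Rightarrow> 'a \<Rightarrow> bool) \<Rightarrow> ('a \<Rightarrow> 'a \<Rightarrow> bool)" where
  "loop_compl v A = (\<lambda>x y. if x = v \<and> y = v then \<not> A x y else A x y)"

definition simple_local_compl :: "'a \<Rightarrow> ('a \<Rightarrow> 'a \<Rightarrow> bool) \<Rightarrow> ('a \<Rightarrow> 'a \<Rightarrow> bool)" where
  "simple_local_compl v A =
     (\<lambda>x y. if x \<noteq> y \<and> adjacent A v x \<and> adjacent A v y then \<not> A x y else A x y)"

definition nonsimple_local_compl :: "'a \<Rightarrow> ('a \<Rightarrow> 'a \<Rightarrow> bool) \<Rightarrow> ('a \<Rightarrow> 'a \<Rightarrow> bool)" where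
  "nonsimple_local_compl v A =
     (\<lambda>x y. if adjacent A v x \<and> adjacent A v y then \<not> A x y else A x y)"

definition local_step :: "'a set \<Rightarrow> ('a \<Rightarrow> 'a \<Rightarrow> bool) \<Rightarrow> ('a \<Rightarrow> 'a \<Rightarrow> bool) \<Rightarrow> bool" where
  "local_step V A B \<longleftrightarrow> (\<exists>v\<in>V. B = loop_compl v A \<or> B = simple_local_compl v A
                                    \<or> B = nonsimple_local_compl v A)"

definition locally_equivalent :: "'a set \<Rightarrow> ('a \<Rightarrow> 'a \<Rightarrow> bool) \<Rightarrow> ('a \<Rightarrow> 'a \<Rightarrow> bool) \<Rightarrow> bool" where
  "locally_equivalent V A B \<longleftrightarrow> (local_step V)\<^sup>*\<^sup>* A B"

text \<open>Elements of W(G): (v, Phi) = phi_G(v), (v, Chi) = chi_G(v), (v, Psi) = psi_G(v).\<close>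
datatype lbl = Phi | Chi | Psi

definition W :: "'a set \<Rightarrow> ('a \<times> lbl) set" where
  "W V = V \<times> UNIV"

text \<open>Column of IAS(G) (over GF(2) = bit) labelled by an element, entry in row x.\<close>
fun ias_col :: "('a \<Rightarrow> 'a \<Rightarrow> bool) \<Rightarrow> 'a \<times> lbl \<Rightarrow> 'a \<Rightarrow> bit" where
  "ias_col A (v, Phi) x = of_bool (x = v)"
| "ias_col A (v, Chi) x = of_bool (A x v)"
| "ias_col A (v, Psi) x = of_bool (A x v) + of_bool (x = v)"

text \<open>Dependence in the binary matroid M[IAS(G)]: a set of elements is dependent iff
  some nonempty subset of its columns is linearly dependent with all coefficients 1,
  i.e. sums to zero over GF(2).\<close>
definition ias_dependent :: "'a set \<Rightarrow> ('a \<Rightarrow> 'a \<Rightarrow> bool) \<Rightarrow> ('a \<times> lbl) set \<Rightarrow> bool" where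
  "ias_dependent V A S \<longleftrightarrow>
     (\<exists>T\<subseteq>S. T \<noteq> {} \<and> (\<forall>x\<in>V. (\<Sum>e\<in>T. ias_col A e x) = 0))"

definition ias_circuit :: "'a set \<Rightarrow> ('a \<Rightarrow> 'a \<Rightarrow> bool) \<Rightarrow> ('a \<times> lbl) set \<Rightarrow> bool" where
  "ias_circuit V A C \<longleftrightarrow> C \<subseteq> W V \<and> ias_dependent V A C \<and>
     (\<forall>D. D \<subset> C \<longrightarrow> \<not> ias_dependent V A D)"

definition transversal :: "'a set \<Rightarrow> ('a \<times> lbl) set \<Rightarrow> bool" where
  "transversal V T \<longleftrightarrow> T \<subseteq> W V \<and> (\<forall>v\<in>V. \<exists>!t. (v, t) \<in> T)"

definition transverse_circuit ::
  "'a set \<Rightarrow> ('a \<Rightarrow> 'a \<Rightarrow> bool) \<Rightarrow> ('a \<times> lbl) set \<Rightarrow> ('a \<times> lbl) set \<Rightarrow> bool" where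
  "transverse_circuit V A T C \<longleftrightarrow> C \<subseteq> T \<and> ias_circuit V A C"

end

theory Submission
  imports Defs
begin


fun swXS :: "lbl \<Rightarrow> lbl" where "swXS Phi = Phi" | "swXS Chi = Psi" | "swXS Psi = Chi"
fun swPC :: "lbl \<Rightarrow> lbl" where "swPC Phi = Chi" | "swPC Chi = Phi" | "swPC Psi = Psi"
fun swPS :: "lbl \<Rightarrow> lbl" where "swPS Phi = Psi" | "swPS Chi = Chi" | "swPS Psi = Phi"

definition piv :: "('a \<Rightarrow> 'a \<Rightarrow> bool) \<Rightarrow> 'a \<Rightarrow> lbl \<Rightarrow> lbl" where
  "piv A u l = (if A u u then swPC l else swPS l)"
definition sigS :: "('a \<Rightarrow> 'a \<Rightarrow> bool) \<Rightarrow> 'a \<Rightarrow> 'a \<Rightarrow> lbl \<Rightarrow> lbl" where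
  "sigS A u x l = (if x = u then piv A u l else if adjacent A u x then swXS l else l)"
definition sigN :: "('a \<Rightarrow> 'a \<Rightarrow> bool) \<Rightarrow> 'a \<Rightarrow> 'a \<Rightarrow> lbl \<Rightarrow> lbl" where
  "sigN A u x l = (if x = u then piv A u l else l)"
definition sigL :: "'a \<Rightarrow> 'a \<Rightarrow> lbl \<Rightarrow> lbl" where
  "sigL u x l = (if x = u then swXS l else l)"

definition Pv :: "('a \<Rightarrow> 'a \<Rightarrow> bool) \<Rightarrow> 'a \<Rightarrow> ('a \<Rightarrow> bit) \<Rightarrow> 'a \<Rightarrow> bit" where
  "Pv A u f r = f r + (if adjacent A u r then f u else 0)"

lemma col_S:
  assumes sym: "\<And>a b. A a b = A b a"
  shows "ias_col (simple_local_compl u A) (x, sigS A u x l) r = Pv A u (ias_col A (x,l)) r"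
  using sym[of u x] sym[of u r] sym[of x r]
  by (cases l) (auto simp: sigS_def piv_def Pv_def simple_local_compl_def adjacent_def)

lemma col_N:
  assumes sym: "\<And>a b. A a b = A b a"
  shows "ias_col (nonsimple_local_compl u A) (x, sigN A u x l) r = Pv A u (ias_col A (x,l)) r"
  using sym[of u x] sym[of u r] sym[of x r]
  by (cases l) (auto simp: sigN_def piv_def Pv_def nonsimple_local_compl_def adjacent_def)

lemma col_L:
  shows "ias_col (loop_compl u A) (x, sigL u x l) r = ias_col A (x,l) r"
  by (cases l) (auto simp: sigL_def loop_compl_def)

definition sz :: "'a set \<Rightarrow> ('a \<Rightarrow> 'a \<Rightarrow> bool) \<Rightarrow> ('a \<Rightarrow> lbl) \<Rightarrow> 'a set \<Rightarrow> bool" where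
  "sz V A t Z \<longleftrightarrow> (\<forall>r\<in>V. (\<Sum>z\<in>Z. ias_col A (z, t z) r) = 0)"

lemma Pv_sum: "(\<Sum>z\<in>Z. Pv A u (f z) r) = Pv A u (\<lambda>r. \<Sum>z\<in>Z. f z r) r"
  by (cases "adjacent A u r") (simp_all only: Pv_def sum.distrib if_True if_False sum.neutral_const add_0_right)

lemma Pv_zero: assumes "u \<in> V" shows "(\<forall>r\<in>V. Pv A u g r = 0) \<longleftrightarrow> (\<forall>r\<in>V. g r = 0)"
proof
  assume h: "\<forall>r\<in>V. Pv A u g r = 0"
  have "g u = 0" using h assms by (auto simp: Pv_def adjacent_def)
  then show "\<forall>r\<in>V. g r = 0" using h by (auto simp: Pv_def split: if_splits)
next
  assume h: "\<forall>r\<in>V. g r = 0"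
  then show "\<forall>r\<in>V. Pv A u g r = 0" using assms by (auto simp: Pv_def)
qed

lemma sz_S:
  assumes sym: "\<And>a b. A a b = A b a" and u: "u \<in> V"
  shows "sz V (simple_local_compl u A) (\<lambda>x. sigS A u x (t x)) Z = sz V A t Z"
proof -
  have "sz V (simple_local_compl u A) (\<lambda>x. sigS A u x (t x)) Z \<longleftrightarrow>
      (\<forall>r\<in>V. Pv A u (\<lambda>r. \<Sum>z\<in>Z. ias_col A (z, t z) r) r = 0)"
    unfolding sz_def col_S[OF sym] Pv_sum by simp
  also have "\<dots> \<longleftrightarrow> sz V A t Z" unfolding sz_def by (rule Pv_zero[OF u])
  finally show ?thesis .
qed

lemma sz_N:
  assumes sym: "\<And>a b. A a b = A b a" and u: "u \<in> V"
  shows "sz V (nonsimple_local_compl u A) (\<lambda>x. sigN A u x (t x)) Z = sz V A t Z"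
proof -
  have "sz V (nonsimple_local_compl u A) (\<lambda>x. sigN A u x (t x)) Z \<longleftrightarrow>
      (\<forall>r\<in>V. Pv A u (\<lambda>r. \<Sum>z\<in>Z. ias_col A (z, t z) r) r = 0)"
    unfolding sz_def col_N[OF sym] Pv_sum by simp
  also have "\<dots> \<longleftrightarrow> sz V A t Z" unfolding sz_def by (rule Pv_zero[OF u])
  finally show ?thesis .
qed

lemma sz_L:
  shows "sz V (loop_compl u A) (\<lambda>x. sigL u x (t x)) Z = sz V A t Z"
  unfolding sz_def col_L by simp

lemma swXS_inv[simp]: "swXS (swXS l) = l" by (cases l) auto
lemma swPC_inv[simp]: "swPC (swPC l) = l" by (cases l) auto
lemma swPS_inv[simp]: "swPS (swPS l) = l" by (cases l) auto
lemma piv_inv[simp]: "piv A u (piv A u l) = l" by (simp add: piv_def)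

lemma lsg_step:
  assumes "looped_simple_graph V A" "local_step V A B"
  shows "looped_simple_graph V B"
proof -
  obtain u where u: "u \<in> V" and B: "B = loop_compl u A \<or> B = simple_local_compl u A
                                    \<or> B = nonsimple_local_compl u A"
    using assms(2) by (auto simp: local_step_def)
  have f: "finite V" and sym: "\<And>a b. A a b = A b a" and sup: "\<And>a b. A a b \<Longrightarrow> a \<in> V \<and> b \<in> V"
    using assms(1) by (auto simp: looped_simple_graph_def)
  have "(\<forall>a b. B a b = B b a) \<and> (\<forall>a b. B a b \<longrightarrow> a \<in> V \<and> b \<in> V)"
    using B
  proof (elim disjE)
    assume "B = loop_compl u A" then show ?thesis using sym sup u by (auto simp: loop_compl_def)
  next
    assume "B = simple_local_compl u A" then show ?thesis using sym sup u
      unfolding simple_local_compl_def adjacent_def by (metis (full_types))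
  next
    assume "B = nonsimple_local_compl u A" then show ?thesis using sym sup u
      unfolding nonsimple_local_compl_def adjacent_def by (metis (full_types))
  qed
  then show ?thesis using f unfolding looped_simple_graph_def by blast
qed

lemma step_sigma:
  assumes "looped_simple_graph V A" "local_step V A B"
  shows "\<exists>\<sigma>. (\<forall>x l. \<sigma> x (\<sigma> x l) = l) \<and> (\<forall>t Z. sz V B (\<lambda>x. \<sigma> x (t x)) Z = sz V A t Z)"
proof -
  have sym: "\<And>a b. A a b = A b a" using assms(1) by (simp add: looped_simple_graph_def)
  obtain u where u: "u \<in> V" and B: "B = loop_compl u A \<or> B = simple_local_compl u A
                                    \<or> B = nonsimple_local_compl u A"
    using assms(2) by (auto simp: local_step_def)
  show ?thesis
  proof (rule disjE[OF B])
    assume "B = loop_compl u A" then show ?thesis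
      apply (intro exI[of _ "sigL u"] conjI allI)
       apply (simp add: sigL_def)
      by (simp add: sz_L)
  next
    assume "B = simple_local_compl u A \<or> B = nonsimple_local_compl u A"
    then show ?thesis
    proof
      assume "B = simple_local_compl u A" then show ?thesis
        apply (intro exI[of _ "sigS A u"] conjI allI)
         apply (simp add: sigS_def)
        by (simp add: sz_S[OF sym u])
    next
      assume "B = nonsimple_local_compl u A" then show ?thesis
        apply (intro exI[of _ "sigN A u"] conjI allI)
         apply (simp add: sigN_def)
        by (simp add: sz_N[OF sym u])
    qed
  qed
qed

definition dep :: "'a set \<Rightarrow> ('a \<Rightarrow> 'a \<Rightarrow> bool) \<Rightarrow> ('a \<Rightarrow> lbl) \<Rightarrow> 'a set \<Rightarrow> bool" where
  "dep V A t Y \<longleftrightarrow> (\<exists>Z\<subseteq>Y. Z \<noteq> {} \<and> sz V A t Z)"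
definition circ :: "'a set \<Rightarrow> ('a \<Rightarrow> 'a \<Rightarrow> bool) \<Rightarrow> ('a \<Rightarrow> lbl) \<Rightarrow> 'a set \<Rightarrow> bool" where
  "circ V A t Y \<longleftrightarrow> Y \<subseteq> V \<and> dep V A t Y \<and> (\<forall>Z. Z \<subset> Y \<longrightarrow> \<not> dep V A t Z)"
definition data :: "'a set \<Rightarrow> ('a \<Rightarrow> 'a \<Rightarrow> bool) \<Rightarrow> ('a \<Rightarrow> lbl) \<Rightarrow> nat \<Rightarrow> nat \<Rightarrow> 'a set \<Rightarrow> 'a set \<Rightarrow> bool" where
  "data V A t k1 k2 X1 X2 \<longleftrightarrow> circ V A t X1 \<and> circ V A t X2 \<and> X1 \<inter> X2 = {} \<and>
     card X1 = k1 \<and> card X2 = k2 \<and> (\<forall>Y. circ V A t Y \<and> Y \<subseteq> X1 \<union> X2 \<longrightarrow> Y = X1 \<or> Y = X2)"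

lemma data_transfer:
  assumes "\<And>Z. sz V B t' Z = sz V A t Z"
  shows "data V B t' k1 k2 X1 X2 = data V A t k1 k2 X1 X2"
  unfolding data_def circ_def dep_def assms ..

lemma step_P2:
  assumes "looped_simple_graph V A" "local_step V A B"
  shows "(\<exists>t X1 X2. data V A t k1 k2 X1 X2) \<longleftrightarrow> (\<exists>t X1 X2. data V B t k1 k2 X1 X2)"
proof -
  obtain \<sigma> where inv: "\<And>x l. \<sigma> x (\<sigma> x l) = l" and s: "\<And>t Z. sz V B (\<lambda>x. \<sigma> x (t x)) Z = sz V A t Z"
    using step_sigma[OF assms] by blast
  show ?thesis
  proof
    assume "\<exists>t X1 X2. data V A t k1 k2 X1 X2"
    then obtain t X1 X2 where "data V A t k1 k2 X1 X2" by blast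
    then have "data V B (\<lambda>x. \<sigma> x (t x)) k1 k2 X1 X2" using data_transfer[OF s] by blast
    then show "\<exists>t X1 X2. data V B t k1 k2 X1 X2" by blast
  next
    assume "\<exists>t X1 X2. data V B t k1 k2 X1 X2"
    then obtain t X1 X2 where d: "data V B t k1 k2 X1 X2" by blast
    have "sz V B t Z = sz V A (\<lambda>x. \<sigma> x (t x)) Z" for Z
      using s[of "\<lambda>x. \<sigma> x (t x)" Z] by (simp add: inv)
    then have "data V A (\<lambda>x. \<sigma> x (t x)) k1 k2 X1 X2" using data_transfer d by metis
    then show "\<exists>t X1 X2. data V A t k1 k2 X1 X2" by blast
  qed
qed

lemma loceq_P2:
  assumes "locally_equivalent V A B" "looped_simple_graph V A"
  shows "looped_simple_graph V B \<and> ((\<exists>t X1 X2. data V A t k1 k2 X1 X2) \<longleftrightarrow> (\<exists>t X1 X2. data V B t k1 k2 X1 X2))"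
  using assms(1)[unfolded locally_equivalent_def]
proof (induction rule: rtranclp_induct)
  case base then show ?case using assms(2) by simp
next
  case (step y z) then show ?case using lsg_step step_P2 by metis
qed


definition gr :: "('a \<Rightarrow> lbl) \<Rightarrow> 'a \<Rightarrow> 'a \<times> lbl" where "gr t x = (x, t x)"

lemma inj_gr[simp]: "inj_on (gr t) X" by (auto simp: inj_on_def gr_def)

lemma sum_gr: "(\<Sum>e\<in>gr t ` X. ias_col A e r) = (\<Sum>x\<in>X. ias_col A (x, t x) r)"
  unfolding sum.reindex[OF inj_gr] by (simp add: gr_def)

lemma dep_img: "ias_dependent V A (gr t ` Y) \<longleftrightarrow> dep V A t Y"
proof
  assume "ias_dependent V A (gr t ` Y)"
  then obtain T where T: "T \<subseteq> gr t ` Y" "T \<noteq> {}" "\<forall>x\<in>V. (\<Sum>e\<in>T. ias_col A e x) = 0"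
    by (auto simp: ias_dependent_def)
  then obtain Z where Z: "Z \<subseteq> Y" "T = gr t ` Z" by (auto simp: subset_image_iff)
  then show "dep V A t Y" using T unfolding dep_def sz_def
    by (intro exI[of _ Z]) (auto simp: sum_gr)
next
  assume "dep V A t Y"
  then obtain Z where Z: "Z \<subseteq> Y" "Z \<noteq> {}" "sz V A t Z" by (auto simp: dep_def)
  then show "ias_dependent V A (gr t ` Y)" unfolding ias_dependent_def sz_def
    by (intro exI[of _ "gr t ` Z"]) (auto simp: sum_gr)
qed

lemma psub_img: "D \<subset> gr t ` Y \<longleftrightarrow> (\<exists>Z. Z \<subset> Y \<and> D = gr t ` Z)"
proof
  assume "D \<subset> gr t ` Y"
  then have "D \<subseteq> gr t ` Y" by blast
  then obtain Z where Z: "Z \<subseteq> Y" "D = gr t ` Z" unfolding subset_image_iff by blast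
  then have "Z \<noteq> Y" using \<open>D \<subset> gr t ` Y\<close> by blast
  then show "\<exists>Z. Z \<subset> Y \<and> D = gr t ` Z" using Z by blast
next
  assume "\<exists>Z. Z \<subset> Y \<and> D = gr t ` Z"
  then obtain Z where "Z \<subset> Y" "D = gr t ` Z" by auto
  have "gr t ` Z \<subseteq> gr t ` Y" using \<open>Z \<subset> Y\<close> by (intro image_mono) blast
  moreover have "gr t ` Z \<noteq> gr t ` Y"
  proof
    assume "gr t ` Z = gr t ` Y"
    then have "Z = Y" using inj_on_image_eq_iff[of "gr t" UNIV Z Y] by simp
    then show False using \<open>Z \<subset> Y\<close> by blast
  qed
  ultimately show "D \<subset> gr t ` Y" using \<open>D = gr t ` Z\<close> by blast
qed

lemma W_img: "gr t ` Y \<subseteq> W V \<longleftrightarrow> Y \<subseteq> V"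
  unfolding W_def gr_def by auto

lemma circ_img: "ias_circuit V A (gr t ` Y) \<longleftrightarrow> circ V A t Y"
proof -
  have eq: "(\<forall>D. D \<subset> gr t ` Y \<longrightarrow> \<not> ias_dependent V A D) \<longleftrightarrow> (\<forall>Z. Z \<subset> Y \<longrightarrow> \<not> dep V A t Z)"
  proof
    assume h: "\<forall>D. D \<subset> gr t ` Y \<longrightarrow> \<not> ias_dependent V A D"
    show "\<forall>Z. Z \<subset> Y \<longrightarrow> \<not> dep V A t Z"
    proof (intro allI impI)
      fix Z assume "Z \<subset> Y"
      then have "gr t ` Z \<subset> gr t ` Y" unfolding psub_img by blast
      then have "\<not> ias_dependent V A (gr t ` Z)" using h by blast
      then show "\<not> dep V A t Z" unfolding dep_img .
    qed
  next
    assume h: "\<forall>Z. Z \<subset> Y \<longrightarrow> \<not> dep V A t Z"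
    show "\<forall>D. D \<subset> gr t ` Y \<longrightarrow> \<not> ias_dependent V A D"
    proof (intro allI impI)
      fix D assume "D \<subset> gr t ` Y"
      then obtain Z where Z: "Z \<subset> Y" "D = gr t ` Z" unfolding psub_img by blast
      then have "\<not> dep V A t Z" using h by blast
      then show "\<not> ias_dependent V A D" unfolding Z(2) dep_img .
    qed
  qed
  show ?thesis unfolding ias_circuit_def circ_def W_img dep_img eq ..
qed

lemma transversal_iff: "transversal V T \<longleftrightarrow> (\<exists>t. T = gr t ` V)"
proof
  assume T: "transversal V T"
  define t where "t v = (THE l. (v, l) \<in> T)" for v
  have ex: "\<And>v. v \<in> V \<Longrightarrow> \<exists>!l. (v, l) \<in> T" using T unfolding transversal_def by blast
  have a: "\<And>v. v \<in> V \<Longrightarrow> (v, t v) \<in> T" unfolding t_def using ex by (rule theI')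
  have b: "\<And>v l. (v, l) \<in> T \<Longrightarrow> v \<in> V" using T unfolding transversal_def W_def by blast
  have c: "\<And>v l. (v, l) \<in> T \<Longrightarrow> l = t v"
  proof -
    fix v l assume h: "(v, l) \<in> T"
    then have "v \<in> V" by (rule b)
    then show "l = t v" using ex[of v] a[of v] h by blast
  qed
  have "T = gr t ` V"
  proof
    show "T \<subseteq> gr t ` V"
    proof
      fix e assume "e \<in> T"
      then obtain v l where e: "e = (v, l)" "(v,l) \<in> T" by (cases e) auto
      then show "e \<in> gr t ` V" using b[OF e(2)] c[OF e(2)] unfolding gr_def by blast
    qed
    show "gr t ` V \<subseteq> T" using a unfolding gr_def by blast
  qed
  then show "\<exists>t. T = gr t ` V" by blast
next
  assume "\<exists>t. T = gr t ` V"
  then show "transversal V T" by (auto simp: transversal_def gr_def W_def)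
qed

lemma inter_img: "gr t ` X1 \<inter> gr t ` X2 = gr t ` (X1 \<inter> X2)"
  by (rule image_Int[symmetric]) simp

lemma RHS_iff:
  "(\<exists>T. transversal V T \<and>
        (\<exists>C1 C2. transverse_circuit V A T C1 \<and> transverse_circuit V A T C2 \<and>
           C1 \<inter> C2 = {} \<and> card C1 = k1 \<and> card C2 = k2 \<and>
           (\<forall>C. transverse_circuit V A T C \<and> C \<subseteq> C1 \<union> C2 \<longrightarrow> C = C1 \<or> C = C2)))
   \<longleftrightarrow> (\<exists>t X1 X2. data V A t k1 k2 X1 X2)" (is "?L \<longleftrightarrow> ?R")
proof
  assume ?L
  then obtain t C1 C2 where c1: "transverse_circuit V A (gr t ` V) C1"
    and c2: "transverse_circuit V A (gr t ` V) C2" and dis: "C1 \<inter> C2 = {}"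
    and k: "card C1 = k1" "card C2 = k2"
    and oth: "\<forall>C. transverse_circuit V A (gr t ` V) C \<and> C \<subseteq> C1 \<union> C2 \<longrightarrow> C = C1 \<or> C = C2"
    by (auto simp: transversal_iff)
  obtain X1 where X1: "X1 \<subseteq> V" "C1 = gr t ` X1" using c1
    by (auto simp: transverse_circuit_def subset_image_iff)
  obtain X2 where X2: "X2 \<subseteq> V" "C2 = gr t ` X2" using c2
    by (auto simp: transverse_circuit_def subset_image_iff)
  have "data V A t k1 k2 X1 X2" unfolding data_def
  proof (intro conjI allI impI)
    show "circ V A t X1" using c1 X1 by (simp add: transverse_circuit_def circ_img)
    show "circ V A t X2" using c2 X2 by (simp add: transverse_circuit_def circ_img)
    show "X1 \<inter> X2 = {}" using dis X1 X2 by (simp add: inter_img)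
    show "card X1 = k1" using k X1 by (simp add: card_image)
    show "card X2 = k2" using k X2 by (simp add: card_image)
  next
    fix Y assume Y: "circ V A t Y \<and> Y \<subseteq> X1 \<union> X2"
    have YV: "Y \<subseteq> V" using Y unfolding circ_def by blast
    have tc: "transverse_circuit V A (gr t ` V) (gr t ` Y)"
      unfolding transverse_circuit_def
      by (rule conjI[OF image_mono[OF YV] circ_img[THEN iffD2]]) (use Y in blast)
    have sub: "gr t ` Y \<subseteq> C1 \<union> C2" unfolding X1(2) X2(2) image_Un[symmetric]
      by (rule image_mono) (use Y in blast)
    have "transverse_circuit V A (gr t ` V) (gr t ` Y) \<and> gr t ` Y \<subseteq> C1 \<union> C2"
      using tc sub by blast
    then have "gr t ` Y = gr t ` X1 \<or> gr t ` Y = gr t ` X2" using oth X1(2) X2(2) by simp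
    then show "Y = X1 \<or> Y = X2" using inj_on_image_eq_iff[of "gr t" UNIV] by auto
  qed
  then show ?R by blast
next
  assume ?R
  then obtain t X1 X2 where d: "data V A t k1 k2 X1 X2" by blast
  have X: "X1 \<subseteq> V" "X2 \<subseteq> V" using d by (auto simp: data_def circ_def)
  have "transversal V (gr t ` V) \<and>
        (transverse_circuit V A (gr t ` V) (gr t ` X1) \<and> transverse_circuit V A (gr t ` V) (gr t ` X2) \<and>
           gr t ` X1 \<inter> gr t ` X2 = {} \<and> card (gr t ` X1) = k1 \<and> card (gr t ` X2) = k2 \<and>
           (\<forall>C. transverse_circuit V A (gr t ` V) C \<and> C \<subseteq> gr t ` X1 \<union> gr t ` X2 \<longrightarrow>
              C = gr t ` X1 \<or> C = gr t ` X2))"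
  proof (intro conjI allI impI)
    show "transversal V (gr t ` V)" by (auto simp: transversal_iff)
    show "transverse_circuit V A (gr t ` V) (gr t ` X1)" using d X
      by (auto simp: transverse_circuit_def circ_img data_def)
    show "transverse_circuit V A (gr t ` V) (gr t ` X2)" using d X
      by (auto simp: transverse_circuit_def circ_img data_def)
    show "gr t ` X1 \<inter> gr t ` X2 = {}" using d by (simp add: inter_img data_def)
    show "card (gr t ` X1) = k1" using d by (simp add: card_image data_def)
    show "card (gr t ` X2) = k2" using d by (simp add: card_image data_def)
  next
    fix C assume C: "transverse_circuit V A (gr t ` V) C \<and> C \<subseteq> gr t ` X1 \<union> gr t ` X2"
    then obtain Y where Y: "Y \<subseteq> X1 \<union> X2" "C = gr t ` Y"
      by (auto simp: subset_image_iff simp flip: image_Un)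
    then have "circ V A t Y" using C by (simp add: transverse_circuit_def circ_img)
    then have "Y = X1 \<or> Y = X2" using d Y by (auto simp: data_def)
    then show "C = gr t ` X1 \<or> C = gr t ` X2" using Y by auto
  qed
  then show ?L
    apply -
    apply (rule exI[of _ "gr t ` V"])
    apply (erule conjE)
    apply (rule conjI, assumption)
    apply (rule exI[of _ "gr t ` X1"])
    apply (rule exI[of _ "gr t ` X2"])
    by assumption
qed


lemma bit_add_self[simp]: "(a::bit) + a = 0" by (cases a) simp_all
lemma bit_add_eq0: "(a::bit) + b = 0 \<longleftrightarrow> a = b" by (cases a; cases b) simp_all
lemma bit_of_bool_add: "(of_bool P + of_bool Q :: bit) = of_bool (P \<noteq> Q)" by auto

definition kap :: "('a \<Rightarrow> 'a \<Rightarrow> bool) \<Rightarrow> 'a \<Rightarrow> lbl" where "kap A u = (if A u u then Psi else Chi)"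
definition nu :: "('a \<Rightarrow> 'a \<Rightarrow> bool) \<Rightarrow> 'a \<Rightarrow> lbl" where "nu A u = (if A u u then Chi else Psi)"

lemma lbl_cases3: "l \<noteq> Phi \<Longrightarrow> l \<noteq> kap A u \<Longrightarrow> l = nu A u"
  by (cases l) (auto simp: kap_def nu_def split: if_splits)
lemma kap_nPhi[simp]: "kap A u \<noteq> Phi" "nu A u \<noteq> Phi" "kap A u \<noteq> nu A u"
  by (auto simp: kap_def nu_def)

lemma col_kap:
  assumes "\<And>a b. A a b = A b a"
  shows "ias_col A (u, kap A u) r = of_bool (adjacent A u r)"
  using assms[of r u] by (auto simp: kap_def adjacent_def)

lemma col_Phi: "ias_col A (u, Phi) r = of_bool (r = u)" by simp

lemma circ_sz: "circ V A t X \<Longrightarrow> sz V A t X \<and> X \<noteq> {}"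
proof -
  assume c: "circ V A t X"
  then obtain Z where Z: "Z \<subseteq> X" "Z \<noteq> {}" "sz V A t Z" by (auto simp: circ_def dep_def)
  have "Z = X"
  proof (rule ccontr)
    assume "Z \<noteq> X"
    then have "Z \<subset> X" using Z by blast
    then have "\<not> dep V A t Z" using c by (simp add: circ_def)
    then show False using Z by (auto simp: dep_def)
  qed
  then show ?thesis using Z by blast
qed

lemma dep_circ:
  assumes "finite Y" "Y \<subseteq> V" "dep V A t Y"
  shows "\<exists>C\<subseteq>Y. circ V A t C"
  using assms
proof (induction "card Y" arbitrary: Y rule: less_induct)
  case less
  show ?case
  proof (cases "circ V A t Y")
    case True then show ?thesis by blast
  next
    case False
    then obtain Z where Z: "Z \<subset> Y" "dep V A t Z" using less.prems by (auto simp: circ_def)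
    have "card Z < card Y" using Z less.prems(1) by (simp add: psubset_card_mono)
    moreover have "finite Z" using Z less.prems(1) by (meson finite_subset psubset_imp_subset)
    ultimately obtain C where "C \<subseteq> Z" "circ V A t C"
      using less.hyps[of Z] Z less.prems by blast
    then show ?thesis using Z by blast
  qed
qed

lemma sum_delta_bit: "finite Y \<Longrightarrow> (\<Sum>y\<in>Y. (of_bool (r = y) :: bit)) = of_bool (r \<in> Y)"
  by (simp add: of_bool_def sum.delta')

lemma readout:
  assumes lsg: "looped_simple_graph V A" and c: "circ V A t X" and v: "v \<in> X" and tv: "t v \<noteq> Phi"
    and ph: "\<forall>x\<in>X - {v}. t x = Phi"
  shows "{r. adjacent A v r} = X - {v}"
proof -
  have XV: "X \<subseteq> V" using c by (simp add: circ_def)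
  have fin: "finite X" using XV lsg finite_subset by (auto simp: looped_simple_graph_def)
  have sym: "\<And>a b. A a b = A b a" and sup: "\<And>a b. A a b \<Longrightarrow> a \<in> V \<and> b \<in> V"
    using lsg by (auto simp: looped_simple_graph_def)
  have s: "sz V A t X" using circ_sz[OF c] by blast
  have row: "ias_col A (v, t v) r = of_bool (r \<in> X - {v})" if r: "r \<in> V" for r
  proof -
    have "(\<Sum>y\<in>X. ias_col A (y, t y) r) = ias_col A (v, t v) r + (\<Sum>y\<in>X - {v}. ias_col A (y, t y) r)"
      by (rule sum.remove[OF fin v])
    also have "(\<Sum>y\<in>X - {v}. ias_col A (y, t y) r) = (\<Sum>y\<in>X - {v}. of_bool (r = y))"
      using ph by (intro sum.cong) auto
    also have "\<dots> = of_bool (r \<in> X - {v})" using fin by (simp add: sum_delta_bit)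
    finally have eq: "(\<Sum>y\<in>X. ias_col A (y, t y) r) = ias_col A (v, t v) r + of_bool (r \<in> X - {v})" .
    have z: "(\<Sum>y\<in>X. ias_col A (y, t y) r) = 0" using s r unfolding sz_def by blast
    show ?thesis using eq z bit_add_eq0 by metis
  qed
  show ?thesis
  proof (intro set_eqI iffI)
    fix r assume "r \<in> {r. adjacent A v r}"
    then have a: "adjacent A v r" by simp
    then have rV: "r \<in> V" "r \<noteq> v" using sup by (auto simp: adjacent_def)
    have "ias_col A (v, t v) r = 1" using a rV tv sym[of v r] by (cases "t v") (auto simp: adjacent_def)
    then show "r \<in> X - {v}" using row[OF rV(1)] by simp
  next
    fix r assume r: "r \<in> X - {v}"
    then have rV: "r \<in> V" using XV by blast
    have "ias_col A (v, t v) r = 1" using row[OF rV] r by simp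
    then show "r \<in> {r. adjacent A v r}" using r tv sym[of v r] by (cases "t v") (auto simp: adjacent_def)
  qed
qed

definition good :: "'a set \<Rightarrow> ('a \<Rightarrow> 'a \<Rightarrow> bool) \<Rightarrow> nat \<Rightarrow> nat \<Rightarrow> bool" where
  "good V B k1 k2 \<longleftrightarrow> (\<exists>v\<in>V. \<exists>w\<in>V. v \<noteq> w \<and> \<not> adjacent B v w \<and>
               degree B v = k1 - 1 \<and> degree B w = k2 - 1 \<and>
               \<not> (\<exists>u. adjacent B v u \<and> adjacent B w u))"

lemma readout_good:
  assumes lsg: "looped_simple_graph V A" and d: "data V A t k1 k2 X1 X2"
    and v: "v1 \<in> X1" "v2 \<in> X2" "t v1 \<noteq> Phi" "t v2 \<noteq> Phi"
    and ph: "\<forall>x\<in>(X1 \<union> X2) - {v1, v2}. t x = Phi"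
  shows "good V A k1 k2"
proof -
  have c1: "circ V A t X1" and c2: "circ V A t X2" and dis: "X1 \<inter> X2 = {}"
    and k: "card X1 = k1" "card X2 = k2" using d by (auto simp: data_def)
  have XV: "X1 \<subseteq> V" "X2 \<subseteq> V" using c1 c2 by (auto simp: circ_def)
  have fin: "finite X1" "finite X2" using XV lsg finite_subset by (auto simp: looped_simple_graph_def)
  have n1: "{r. adjacent A v1 r} = X1 - {v1}"
    using readout[OF lsg c1 v(1) v(3)] ph dis v by blast
  have n2: "{r. adjacent A v2 r} = X2 - {v2}"
    using readout[OF lsg c2 v(2) v(4)] ph dis v by blast
  have a: "v1 \<noteq> v2" using dis v by blast
  have b: "\<not> adjacent A v1 v2" using n1 dis v by blast
  have c: "degree A v1 = k1 - 1" unfolding degree_def n1 using fin v k by simp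
  have e: "degree A v2 = k2 - 1" unfolding degree_def n2 using fin v k by simp
  have f: "\<not> (\<exists>u. adjacent A v1 u \<and> adjacent A v2 u)" using n1 n2 dis by blast
  have g: "v1 \<in> V" "v2 \<in> V" using XV v by auto
  show ?thesis unfolding good_def using a b c e f g by blast
qed


lemma sumrow:
  assumes fin: "finite Y" and vw: "v \<noteq> w"
    and t: "t = (\<lambda>x. if x = v then kap B v else if x = w then kap B w else Phi)"
    and sym: "\<And>a b. B a b = B b a"
  shows "(\<Sum>y\<in>Y. ias_col B (y, t y) r) = of_bool (r \<in> Y - {v,w})
     + (if v \<in> Y then of_bool (adjacent B v r) else 0) + (if w \<in> Y then of_bool (adjacent B w r) else 0)"
proof -
  have "(\<Sum>y\<in>Y. ias_col B (y, t y) r) = (\<Sum>y\<in>Y \<inter> {v,w}. ias_col B (y, t y) r) + (\<Sum>y\<in>Y - {v,w}. ias_col B (y, t y) r)"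
    by (rule sum.Int_Diff[OF fin])
  also have "(\<Sum>y\<in>Y - {v,w}. ias_col B (y, t y) r) = (\<Sum>y\<in>Y - {v,w}. of_bool (r = y))"
    by (intro sum.cong) (auto simp: t)
  also have "\<dots> = of_bool (r \<in> Y - {v,w})" using fin by (simp add: sum_delta_bit)
  also have "(\<Sum>y\<in>Y \<inter> {v,w}. ias_col B (y, t y) r) = (if v \<in> Y then of_bool (adjacent B v r) else 0) + (if w \<in> Y then of_bool (adjacent B w r) else 0)"
  proof -
    have cv: "ias_col B (v, t v) r = of_bool (adjacent B v r)" using col_kap[of B, OF sym, of v r] by (simp add: t)
    have cw: "ias_col B (w, t w) r = of_bool (adjacent B w r)" using col_kap[of B, OF sym, of w r] vw by (simp add: t)
    show ?thesis
    proof (cases "v \<in> Y"; cases "w \<in> Y")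
      assume "v \<in> Y" "w \<in> Y" then have "Y \<inter> {v,w} = {v,w}" by blast
      then show ?thesis using cv cw vw \<open>v \<in> Y\<close> \<open>w \<in> Y\<close> by (simp del: add_bit_eq_xor)
    next
      assume "v \<in> Y" "w \<notin> Y" then have "Y \<inter> {v,w} = {v}" by blast
      then show ?thesis using cv \<open>v \<in> Y\<close> \<open>w \<notin> Y\<close> by (simp del: add_bit_eq_xor)
    next
      assume "v \<notin> Y" "w \<in> Y" then have "Y \<inter> {v,w} = {w}" by blast
      then show ?thesis using cw \<open>v \<notin> Y\<close> \<open>w \<in> Y\<close> by (simp del: add_bit_eq_xor)
    next
      assume "v \<notin> Y" "w \<notin> Y" then have "Y \<inter> {v,w} = {}" by blast
      then show ?thesis using \<open>v \<notin> Y\<close> \<open>w \<notin> Y\<close> by (simp del: add_bit_eq_xor)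
    qed
  qed
  finally show ?thesis by (simp only: ac_simps)
qed

lemma half:
  assumes lsg: "looped_simple_graph V B" and vw: "v \<in> V" "w \<in> V" "v \<noteq> w" "\<not> adjacent B v w"
    and nc: "\<And>u. \<not> (adjacent B v u \<and> adjacent B w u)"
    and t: "t = (\<lambda>x. if x = v then kap B v else if x = w then kap B w else Phi)"
  shows "circ V B t (insert v {u. adjacent B v u})"
    "\<And>Y. circ V B t Y \<Longrightarrow> Y \<subseteq> insert v {u. adjacent B v u} \<union> insert w {u. adjacent B w u} \<Longrightarrow> v \<in> Y
       \<Longrightarrow> Y = insert v {u. adjacent B v u}"
proof -
  have sym: "\<And>a b. B a b = B b a" and sup: "\<And>a b. B a b \<Longrightarrow> a \<in> V \<and> b \<in> V" and fV: "finite V"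
    using lsg by (auto simp: looped_simple_graph_def)
  have adjsym: "adjacent B a b = adjacent B b a" for a b using sym by (auto simp: adjacent_def)
  define N1 where "N1 = {u. adjacent B v u}"
  have N1V: "N1 \<subseteq> V" using sup by (auto simp: N1_def adjacent_def)
  have vN1: "v \<notin> N1" "w \<notin> N1" using vw by (auto simp: N1_def adjacent_def)
  have X1V: "insert v N1 \<subseteq> V" using N1V vw by blast
  have finY: "finite Y" if "Y \<subseteq> V" for Y using that fV finite_subset by blast
  note SR = sumrow[OF _ vw(3) t sym]
  have sz1: "sz V B t (insert v N1)"
    unfolding sz_def
  proof
    fix r assume "r \<in> V"
    have "r \<in> insert v N1 - {v,w} \<longleftrightarrow> adjacent B v r" using vN1 by (auto simp: N1_def)
    then show "(\<Sum>y\<in>insert v N1. ias_col B (y, t y) r) = 0"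
      using SR[OF finY[OF X1V], of r] vN1 vw(3) by simp
  qed
  have nsz: "\<not> sz V B t Z" if Z: "Z \<subset> insert v N1" "Z \<noteq> {}" for Z
  proof
    assume s: "sz V B t Z"
    have ZV: "Z \<subseteq> V" using Z X1V by blast
    have wZ: "w \<notin> Z" using Z vN1 vw by blast
    show False
    proof (cases "v \<in> Z")
      case True
      then obtain r where r: "r \<in> N1" "r \<notin> Z" using Z by blast
      then have "r \<in> V" "adjacent B v r" using N1V by (auto simp: N1_def)
      then show False using s SR[OF finY[OF ZV], of r] True wZ r unfolding sz_def by auto
    next
      case False
      then obtain z where z: "z \<in> Z" using Z by blast
      then have "z \<in> V" "z \<noteq> w" "z \<noteq> v" using ZV wZ False by auto
      then show False using s SR[OF finY[OF ZV], of z] False wZ z unfolding sz_def by auto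
    qed
  qed
  show c1: "circ V B t (insert v {u. adjacent B v u})"
    unfolding N1_def[symmetric] circ_def dep_def
  proof (intro conjI allI impI)
    show "insert v N1 \<subseteq> V" by (rule X1V)
    show "\<exists>Z\<subseteq>insert v N1. Z \<noteq> {} \<and> sz V B t Z" using sz1 by blast
  next
    fix Z assume Z: "Z \<subset> insert v N1"
    show "\<not> (\<exists>Za\<subseteq>Z. Za \<noteq> {} \<and> sz V B t Za)"
    proof
      assume "\<exists>Za\<subseteq>Z. Za \<noteq> {} \<and> sz V B t Za"
      then obtain Za where "Za \<subseteq> Z" "Za \<noteq> {}" "sz V B t Za" by blast
      then show False using nsz[of Za] Z by blast
    qed
  qed
  fix Y assume Y: "circ V B t Y" "Y \<subseteq> insert v {u. adjacent B v u} \<union> insert w {u. adjacent B w u}" "v \<in> Y"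
  have sY: "sz V B t Y" using circ_sz[OF Y(1)] by blast
  have YV: "Y \<subseteq> V" using Y(1) by (simp add: circ_def)
  have sub: "insert v N1 \<subseteq> Y"
  proof
    fix r assume r: "r \<in> insert v N1"
    show "r \<in> Y"
    proof (cases "r = v")
      case True then show ?thesis using Y(3) by simp
    next
      case False
      then have a: "adjacent B v r" "r \<in> V" "r \<noteq> w" using r N1V vN1 by (auto simp: N1_def)
      have na: "\<not> adjacent B w r" using nc a by blast
      show ?thesis
      proof (rule ccontr)
        assume "r \<notin> Y"
        have z: "(if w \<in> Y then of_bool (adjacent B w r) else 0) = (0::bit)" using na by simp
        show False using \<open>r \<notin> Y\<close> sY SR[OF finY[OF YV], of r] a Y(3) unfolding sz_def z by auto
      qed
    qed
  qed
  show "Y = insert v {u. adjacent B v u}"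
  proof (rule ccontr)
    assume "Y \<noteq> insert v {u. adjacent B v u}"
    then have "insert v N1 \<subset> Y" using sub by (auto simp: N1_def)
    then show False using Y(1) c1 by (auto simp: circ_def N1_def)
  qed
qed

lemma good_data:
  assumes lsg: "looped_simple_graph V B" and k: "k1 > 0" "k2 > 0" and g: "good V B k1 k2"
  shows "\<exists>t X1 X2. data V B t k1 k2 X1 X2"
proof -
  obtain v w where vw: "v \<in> V" "w \<in> V" "v \<noteq> w" "\<not> adjacent B v w"
    and dg: "degree B v = k1 - 1" "degree B w = k2 - 1"
    and nc: "\<And>u. \<not> (adjacent B v u \<and> adjacent B w u)"
    using g unfolding good_def by blast
  have sym: "\<And>a b. B a b = B b a" and sup: "\<And>a b. B a b \<Longrightarrow> a \<in> V \<and> b \<in> V" and fV: "finite V"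
    using lsg by (auto simp: looped_simple_graph_def)
  have adjsym: "adjacent B a b = adjacent B b a" for a b using sym by (auto simp: adjacent_def)
  define t where "t = (\<lambda>x. if x = v then kap B v else if x = w then kap B w else Phi)"
  have t': "t = (\<lambda>x. if x = w then kap B w else if x = v then kap B v else Phi)"
    using vw(3) unfolding t_def by auto
  define X1 where "X1 = insert v {u. adjacent B v u}"
  define X2 where "X2 = insert w {u. adjacent B w u}"
  have vw': "\<not> adjacent B w v" using vw(4) adjsym by blast
  have nc': "\<And>u. \<not> (adjacent B w u \<and> adjacent B v u)" using nc by blast
  note h1 = half[OF lsg vw nc t_def]
  note h2 = half[OF lsg vw(2,1) vw(3)[symmetric] vw' nc' t']
  have fN: "finite {u. adjacent B v u}" "finite {u. adjacent B w u}"
    using sup fV by (auto simp: adjacent_def intro: finite_subset[of _ V])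
  have nvN: "v \<notin> {u. adjacent B v u}" "w \<notin> {u. adjacent B w u}" by (auto simp: adjacent_def)
  have "data V B t k1 k2 X1 X2" unfolding data_def
  proof (intro conjI allI impI)
    show "circ V B t X1" using h1(1) by (simp add: X1_def)
    show "circ V B t X2" using h2(1) by (simp add: X2_def)
    show "X1 \<inter> X2 = {}" unfolding X1_def X2_def using vw(3,4) nc adjsym by auto
    show "card X1 = k1" unfolding X1_def using fN nvN dg k by (simp add: degree_def)
    show "card X2 = k2" unfolding X2_def using fN nvN dg k by (simp add: degree_def)
  next
    fix Y assume Y: "circ V B t Y \<and> Y \<subseteq> X1 \<union> X2"
    show "Y = X1 \<or> Y = X2"
    proof (cases "v \<in> Y")
      case True then show ?thesis using h1(2)[of Y] Y by (simp add: X1_def X2_def)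
    next
      case nv: False
      show ?thesis
      proof (cases "w \<in> Y")
        case True then show ?thesis using h2(2)[of Y] Y by (auto simp: X1_def X2_def)
      next
        case False
        have sY: "sz V B t Y" "Y \<noteq> {}" using circ_sz Y by blast+
        have YV: "Y \<subseteq> V" using Y by (simp add: circ_def)
        then have fY: "finite Y" using fV finite_subset by blast
        obtain y where y: "y \<in> Y" using sY by blast
        then have "y \<in> V" "y \<noteq> v" "y \<noteq> w" using YV nv False by auto
        then show ?thesis using sY(1) sumrow[OF fY vw(3) t_def sym, of y] y nv False
          unfolding sz_def by auto
      qed
    qed
  qed
  then show ?thesis by blast
qed


lemma sigS_other: "x \<noteq> u \<Longrightarrow> (sigS A u x l = Phi) = (l = Phi)"
  by (cases l) (auto simp: sigS_def)
lemma sigS_u_nu: "sigS A u u (nu A u) = Phi" by (auto simp: sigS_def piv_def nu_def)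
lemma sigS_u_kap: "sigS A u u (kap A u) = kap A u" by (auto simp: sigS_def piv_def kap_def)
lemma sigS_adj: "adjacent A u x \<Longrightarrow> sigS A u x l = swXS l" by (auto simp: sigS_def adjacent_def)
lemma swXS_nu: "swXS (nu A x) = kap A x" by (auto simp: nu_def kap_def)
lemma sigN_other: "x \<noteq> w \<Longrightarrow> sigN A w x l = l" by (simp add: sigN_def)
lemma sigN_w: "(sigN A w w l = Phi) = (l = nu A w)"
  by (cases l) (auto simp: sigN_def piv_def nu_def)

lemma simple_basic:
  assumes lsg: "looped_simple_graph V A" and u: "u \<in> V"
  shows "locally_equivalent V A (simple_local_compl u A)"
    "looped_simple_graph V (simple_local_compl u A)"
    "\<And>Z. sz V (simple_local_compl u A) (\<lambda>x. sigS A u x (t x)) Z = sz V A t Z"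
    "\<And>x. simple_local_compl u A x x = A x x"
    "\<And>x. adjacent (simple_local_compl u A) u x = adjacent A u x"
proof -
  have st: "local_step V A (simple_local_compl u A)" using u by (auto simp: local_step_def)
  then show "locally_equivalent V A (simple_local_compl u A)" by (simp add: locally_equivalent_def)
  show "looped_simple_graph V (simple_local_compl u A)" by (rule lsg_step[OF lsg st])
  have sym: "\<And>a b. A a b = A b a" using lsg by (simp add: looped_simple_graph_def)
  show "\<And>Z. sz V (simple_local_compl u A) (\<lambda>x. sigS A u x (t x)) Z = sz V A t Z"
    by (rule sz_S[OF sym u])
  show "\<And>x. simple_local_compl u A x x = A x x" by (simp add: simple_local_compl_def)
  show "\<And>x. adjacent (simple_local_compl u A) u x = adjacent A u x"
    by (auto simp: simple_local_compl_def adjacent_def)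
qed

lemma nonsimple_basic:
  assumes lsg: "looped_simple_graph V A" and u: "u \<in> V"
  shows "locally_equivalent V A (nonsimple_local_compl u A)"
    "looped_simple_graph V (nonsimple_local_compl u A)"
    "\<And>Z. sz V (nonsimple_local_compl u A) (\<lambda>x. sigN A u x (t x)) Z = sz V A t Z"
    "\<And>x. adjacent A u x \<Longrightarrow> nonsimple_local_compl u A x x = (\<not> A x x)"
proof -
  have st: "local_step V A (nonsimple_local_compl u A)" using u by (auto simp: local_step_def)
  then show "locally_equivalent V A (nonsimple_local_compl u A)" by (simp add: locally_equivalent_def)
  show "looped_simple_graph V (nonsimple_local_compl u A)" by (rule lsg_step[OF lsg st])
  have sym: "\<And>a b. A a b = A b a" using lsg by (simp add: looped_simple_graph_def)
  show "\<And>Z. sz V (nonsimple_local_compl u A) (\<lambda>x. sigN A u x (t x)) Z = sz V A t Z"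
    by (rule sz_N[OF sym u])
  show "\<And>x. adjacent A u x \<Longrightarrow> nonsimple_local_compl u A x x = (\<not> A x x)"
    by (simp add: nonsimple_local_compl_def)
qed

lemma fixnu:
  assumes lsg: "looped_simple_graph V A" and u: "u \<in> V" and tu: "t u = nu A u"
  shows "\<exists>B t'. locally_equivalent V A B \<and> looped_simple_graph V B \<and> (\<forall>Z. sz V B t' Z = sz V A t Z)
     \<and> t' u = Phi \<and> (\<forall>x. x \<noteq> u \<longrightarrow> (t' x = Phi) = (t x = Phi))"
proof -
  define B where "B = simple_local_compl u A"
  define t' where "t' = (\<lambda>x. sigS A u x (t x))"
  note sb = simple_basic[OF lsg u, folded B_def]
  have "t' u = Phi" using tu by (simp add: t'_def sigS_u_nu)
  moreover have "\<forall>x. x \<noteq> u \<longrightarrow> (t' x = Phi) = (t x = Phi)" by (simp add: t'_def sigS_other)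
  ultimately show ?thesis using sb(1,2) sb(3)[of t, folded t'_def] by blast
qed

lemma dekap:
  assumes lsg: "looped_simple_graph V A" and u: "u \<in> V" and tu: "t u = kap A u"
    and uw: "adjacent A u w" and tw: "t w \<noteq> nu A w"
  shows "\<exists>B t'. locally_equivalent V A B \<and> looped_simple_graph V B \<and> (\<forall>Z. sz V B t' Z = sz V A t Z)
     \<and> t' u = nu B u \<and> t' w \<noteq> Phi \<and> (\<forall>x. x \<noteq> w \<longrightarrow> t' x = t x)"
proof -
  have sym: "\<And>a b. A a b = A b a" and sup: "\<And>a b. A a b \<Longrightarrow> a \<in> V \<and> b \<in> V"
    using lsg by (auto simp: looped_simple_graph_def)
  have wu: "adjacent A w u" using uw sym by (auto simp: adjacent_def)
  have w: "w \<in> V" "w \<noteq> u" using uw sup by (auto simp: adjacent_def)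
  define B where "B = nonsimple_local_compl w A"
  define t' where "t' = (\<lambda>x. sigN A w x (t x))"
  note nb = nonsimple_basic[OF lsg w(1), folded B_def]
  have "B u u = (\<not> A u u)" using nb(4)[OF wu] .
  then have "t' u = nu B u" using w(2) tu by (simp add: t'_def sigN_other kap_def nu_def)
  moreover have "t' w \<noteq> Phi" using tw by (simp add: t'_def sigN_w)
  moreover have "\<forall>x. x \<noteq> w \<longrightarrow> t' x = t x" by (simp add: t'_def sigN_other)
  ultimately show ?thesis using nb(1,2) nb(3)[of t, folded t'_def] by blast
qed

lemma prepw:
  assumes lsg: "looped_simple_graph V A" and u: "u \<in> V" and tu: "t u = kap A u"
    and uw: "adjacent A u w" and tw: "t w = nu A w"
  shows "\<exists>B t'. locally_equivalent V A B \<and> looped_simple_graph V B \<and> (\<forall>Z. sz V B t' Z = sz V A t Z)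
     \<and> t' u = kap B u \<and> adjacent B u w \<and> t' w \<noteq> nu B w \<and> (\<forall>x. x \<noteq> u \<longrightarrow> (t' x = Phi) = (t x = Phi))"
proof -
  define B where "B = simple_local_compl u A"
  define t' where "t' = (\<lambda>x. sigS A u x (t x))"
  note sb = simple_basic[OF lsg u, folded B_def]
  have kB: "\<And>x. kap B x = kap A x" "\<And>x. nu B x = nu A x" using sb(4) by (auto simp: kap_def nu_def)
  have "t' u = kap B u" using tu kB by (simp add: t'_def sigS_u_kap)
  moreover have "adjacent B u w" using sb(5) uw by simp
  moreover have "t' w = kap A w" using uw tw by (simp add: t'_def sigS_adj swXS_nu)
  then have "t' w \<noteq> nu B w" using kB by simp
  moreover have "\<forall>x. x \<noteq> u \<longrightarrow> (t' x = Phi) = (t x = Phi)" by (simp add: t'_def sigS_other)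
  ultimately show ?thesis using sb(1,2) sb(3)[of t, folded t'_def] by blast
qed

lemma exw:
  assumes lsg: "looped_simple_graph V A" and d: "data V A t k1 k2 X1 X2"
    and v: "v1 \<in> X1" "v2 \<in> X2" and u: "u \<in> (X1 \<union> X2) - {v1, v2}" and tu: "t u = kap A u"
  shows "\<exists>w. adjacent A u w \<and> \<not> (w \<in> (X1 \<union> X2) - {v1, v2} \<and> t w = Phi)"
proof (rule ccontr)
  assume "\<not> ?thesis"
  then have N: "\<And>w. adjacent A u w \<Longrightarrow> w \<in> (X1 \<union> X2) - {v1, v2} \<and> t w = Phi" by blast
  have sym: "\<And>a b. A a b = A b a" and fV: "finite V"
    using lsg by (auto simp: looped_simple_graph_def)
  have XV: "X1 \<subseteq> V" "X2 \<subseteq> V" using d by (auto simp: data_def circ_def)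
  define Nu where "Nu = {w. adjacent A u w}"
  define Y where "Y = insert u Nu"
  have YS: "Y \<subseteq> (X1 \<union> X2) - {v1, v2}" using N u by (auto simp: Y_def Nu_def)
  have YV: "Y \<subseteq> V" using YS XV by blast
  have fY: "finite Y" "finite Nu" using YV fV finite_subset by (auto simp: Y_def)
  have uN: "u \<notin> Nu" by (simp add: Nu_def adjacent_def)
  have "sz V A t Y" unfolding sz_def
  proof
    fix r assume "r \<in> V"
    have "(\<Sum>y\<in>Y. ias_col A (y, t y) r) = ias_col A (u, t u) r + (\<Sum>y\<in>Nu. ias_col A (y, t y) r)"
      unfolding Y_def by (rule sum.insert[OF fY(2) uN])
    also have "(\<Sum>y\<in>Nu. ias_col A (y, t y) r) = (\<Sum>y\<in>Nu. of_bool (r = y))"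
      using N by (intro sum.cong) (auto simp: Nu_def)
    also have "\<dots> = of_bool (r \<in> Nu)" using fY by (simp add: sum_delta_bit)
    also have "ias_col A (u, t u) r = of_bool (r \<in> Nu)" using col_kap[of A, OF sym, of u r] tu
      by (simp add: Nu_def)
    finally show "(\<Sum>y\<in>Y. ias_col A (y, t y) r) = 0" by simp
  qed
  then have "dep V A t Y" unfolding dep_def Y_def by blast
  then obtain C where C: "C \<subseteq> Y" "circ V A t C" using dep_circ[OF fY(1) YV] by blast
  have CX: "C \<subseteq> X1 \<union> X2" using C(1) YS by blast
  have "C = X1 \<or> C = X2" using d C(2) CX unfolding data_def by blast
  then show False using C YS v by blast
qed

lemma progress:
  assumes lsg: "looped_simple_graph V A" and d: "data V A t k1 k2 X1 X2"
    and v: "v1 \<in> X1" "v2 \<in> X2" "t v1 \<noteq> Phi" "t v2 \<noteq> Phi"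
    and u: "u \<in> (X1 \<union> X2) - {v1, v2}" and tu: "t u \<noteq> Phi"
  shows "\<exists>B t'. locally_equivalent V A B \<and> looped_simple_graph V B \<and> (\<forall>Z. sz V B t' Z = sz V A t Z)
     \<and> t' u = Phi \<and> t' v1 \<noteq> Phi \<and> t' v2 \<noteq> Phi \<and> (\<forall>x\<in>(X1 \<union> X2) - {v1, v2}. t x = Phi \<longrightarrow> t' x = Phi)"
proof -
  have XV: "X1 \<subseteq> V" "X2 \<subseteq> V" using d by (auto simp: data_def circ_def)
  have uV: "u \<in> V" using u XV by blast
  have sym: "\<And>a b. A a b = A b a" and sup: "\<And>a b. A a b \<Longrightarrow> a \<in> V \<and> b \<in> V"
    using lsg by (auto simp: looped_simple_graph_def)
  show ?thesis
  proof (cases "t u = kap A u")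
    case False
    then have tnu: "t u = nu A u" by (rule lbl_cases3[OF tu])
    obtain B t' where B: "locally_equivalent V A B" "looped_simple_graph V B" "\<forall>Z. sz V B t' Z = sz V A t Z"
      "t' u = Phi" "\<forall>x. x \<noteq> u \<longrightarrow> (t' x = Phi) = (t x = Phi)"
      using fixnu[of V A u t, OF lsg uV tnu] by blast
    have "v1 \<noteq> u" "v2 \<noteq> u" using u by auto
    then have "t' v1 \<noteq> Phi" "t' v2 \<noteq> Phi" using B(5) v(3,4) by auto
    moreover have "\<forall>x\<in>(X1 \<union> X2) - {v1, v2}. t x = Phi \<longrightarrow> t' x = Phi"
      using B(5) tu by auto
    ultimately show ?thesis using B(1-4) by blast
  next
    case kap: True
    obtain w where w: "adjacent A u w" "\<not> (w \<in> (X1 \<union> X2) - {v1, v2} \<and> t w = Phi)"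
      using exw[OF lsg d v(1,2) u kap] by blast
    have wu: "w \<noteq> u" using w by (auto simp: adjacent_def)
    have wstat: "w \<in> (X1 \<union> X2) - {v1, v2} \<or> w = v1 \<or> w = v2 \<Longrightarrow> t w \<noteq> Phi" using w v by auto
    have "\<exists>A1 t1. locally_equivalent V A A1 \<and> looped_simple_graph V A1 \<and> (\<forall>Z. sz V A1 t1 Z = sz V A t Z)
      \<and> t1 u = kap A1 u \<and> adjacent A1 u w \<and> t1 w \<noteq> nu A1 w \<and> (\<forall>x. x \<noteq> u \<longrightarrow> (t1 x = Phi) = (t x = Phi))"
    proof (cases "t w = nu A w")
      case True then show ?thesis using prepw[of V A u t w, OF lsg uV kap w(1) True] by blast
    next
      case False then show ?thesis using kap w(1) lsg by (intro exI[of _ A] exI[of _ t]) (auto simp: locally_equivalent_def)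
    qed
    then obtain A1 t1 where A1: "locally_equivalent V A A1" "looped_simple_graph V A1" "\<forall>Z. sz V A1 t1 Z = sz V A t Z"
      "t1 u = kap A1 u" "adjacent A1 u w" "t1 w \<noteq> nu A1 w" "\<forall>x. x \<noteq> u \<longrightarrow> (t1 x = Phi) = (t x = Phi)"
      by blast
    obtain A2 t2 where A2: "locally_equivalent V A1 A2" "looped_simple_graph V A2" "\<forall>Z. sz V A2 t2 Z = sz V A1 t1 Z"
      "t2 u = nu A2 u" "t2 w \<noteq> Phi" "\<forall>x. x \<noteq> w \<longrightarrow> t2 x = t1 x"
      using dekap[of V A1 u t1 w, OF A1(2) uV A1(4,5,6)] by blast
    obtain A3 t3 where A3: "locally_equivalent V A2 A3" "looped_simple_graph V A3" "\<forall>Z. sz V A3 t3 Z = sz V A2 t2 Z"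
      "t3 u = Phi" "\<forall>x. x \<noteq> u \<longrightarrow> (t3 x = Phi) = (t2 x = Phi)"
      using fixnu[of V A2 u t2, OF A2(2) uV A2(4)] by blast
    have le: "locally_equivalent V A A3" using A1(1) A2(1) A3(1)
      unfolding locally_equivalent_def by (meson rtranclp_trans)
    have szq: "\<forall>Z. sz V A3 t3 Z = sz V A t Z" using A1(3) A2(3) A3(3) by simp
    have st: "(t3 x = Phi) = (t x = Phi)" if "x \<noteq> u" "x \<noteq> w" for x
      using that A1(7) A2(6) A3(5) by simp
    have stw: "t3 w \<noteq> Phi" using A3(5) A2(5) wu by simp
    have "v1 \<noteq> u" "v2 \<noteq> u" using u by auto
    then have "t3 v1 \<noteq> Phi" "t3 v2 \<noteq> Phi"
      using st[of v1] st[of v2] stw v(3,4) by (cases "v1 = w"; cases "v2 = w"; simp)+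
    moreover have "\<forall>x\<in>(X1 \<union> X2) - {v1, v2}. t x = Phi \<longrightarrow> t3 x = Phi"
    proof (intro ballI impI)
      fix x assume x: "x \<in> (X1 \<union> X2) - {v1, v2}" "t x = Phi"
      then have "x \<noteq> u" using tu by blast
      moreover have "x \<noteq> w" using x w(2) by blast
      ultimately show "t3 x = Phi" using st x(2) by blast
    qed
    ultimately show ?thesis using le A3(2) szq A3(4) by blast
  qed
qed

lemma nonphi: "finite V \<Longrightarrow> circ V A t X \<Longrightarrow> \<exists>v\<in>X. t v \<noteq> Phi"
proof (rule ccontr)
  assume fV: "finite V" and c: "circ V A t X" and "\<not> (\<exists>v\<in>X. t v \<noteq> Phi)"
  then have ph: "\<And>x. x \<in> X \<Longrightarrow> t x = Phi" by blast
  have s: "sz V A t X" "X \<noteq> {}" using circ_sz[OF c] by blast+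
  then obtain x where x: "x \<in> X" by blast
  have xV: "x \<in> V" using x c by (auto simp: circ_def)
  have fin: "finite X" using c fV finite_subset by (auto simp: circ_def)
  have "(\<Sum>y\<in>X. ias_col A (y, t y) x) = (\<Sum>y\<in>X. of_bool (x = y))" using ph by (intro sum.cong) auto
  also have "\<dots> = 1" using fin x by (simp add: sum_delta_bit)
  finally show False using s xV unfolding sz_def by simp
qed


lemma algo:
  assumes "looped_simple_graph V A" "data V A t k1 k2 X1 X2" "v1 \<in> X1" "v2 \<in> X2" "t v1 \<noteq> Phi" "t v2 \<noteq> Phi"
  shows "\<exists>B. locally_equivalent V A B \<and> good V B k1 k2"
  using assms
proof (induction "card {x \<in> (X1 \<union> X2) - {v1, v2}. t x \<noteq> Phi}" arbitrary: A t rule: less_induct)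
  case less
  have fV: "finite V" using less.prems(1) by (simp add: looped_simple_graph_def)
  have XV: "X1 \<subseteq> V" "X2 \<subseteq> V" using less.prems(2) by (auto simp: data_def circ_def)
  have finR: "finite {x \<in> (X1 \<union> X2) - {v1, v2}. t x \<noteq> Phi}"
    using XV fV by (auto intro: finite_subset[of _ V])
  show ?case
  proof (cases "{x \<in> (X1 \<union> X2) - {v1, v2}. t x \<noteq> Phi} = {}")
    case True
    then have "\<forall>x\<in>(X1 \<union> X2) - {v1, v2}. t x = Phi" by blast
    then have "good V A k1 k2" using readout_good[OF less.prems] by blast
    then show ?thesis by (auto simp: locally_equivalent_def)
  next
    case False
    then obtain u where u: "u \<in> (X1 \<union> X2) - {v1, v2}" "t u \<noteq> Phi" by blast
    obtain B t' where B: "locally_equivalent V A B" "looped_simple_graph V B" "\<forall>Z. sz V B t' Z = sz V A t Z"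
      "t' u = Phi" "t' v1 \<noteq> Phi" "t' v2 \<noteq> Phi" "\<forall>x\<in>(X1 \<union> X2) - {v1, v2}. t x = Phi \<longrightarrow> t' x = Phi"
      using progress[OF less.prems(1,2,3,4,5,6) u] by blast
    have dB: "data V B t' k1 k2 X1 X2" using data_transfer[of V B t' A t] B(3) less.prems(2) by blast
    have sub: "{x \<in> (X1 \<union> X2) - {v1, v2}. t' x \<noteq> Phi} \<subseteq> {x \<in> (X1 \<union> X2) - {v1, v2}. t x \<noteq> Phi} - {u}"
      using B(4,7) by blast
    have "card {x \<in> (X1 \<union> X2) - {v1, v2}. t' x \<noteq> Phi} < card {x \<in> (X1 \<union> X2) - {v1, v2}. t x \<noteq> Phi}"
    proof -
      have "card {x \<in> (X1 \<union> X2) - {v1, v2}. t' x \<noteq> Phi} \<le> card ({x \<in> (X1 \<union> X2) - {v1, v2}. t x \<noteq> Phi} - {u})"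
        using sub finR by (intro card_mono) auto
      also have "\<dots> < card {x \<in> (X1 \<union> X2) - {v1, v2}. t x \<noteq> Phi}"
        using u finR by (intro card_Diff1_less) auto
      finally show ?thesis .
    qed
    then obtain C where C: "locally_equivalent V B C" "good V C k1 k2"
      using less.hyps[OF _ B(2) dB less.prems(3,4) B(5,6)] by blast
    have "locally_equivalent V A C" using B(1) C(1) unfolding locally_equivalent_def
      by (rule rtranclp_trans)
    then show ?thesis using C(2) by blast
  qed
qed

theorem corollary6p1:
  fixes V :: "'a set" and A :: "'a \<Rightarrow> 'a \<Rightarrow> bool" and k1 k2 :: nat
  assumes "looped_simple_graph V A" and "k1 > 0" and "k2 > 0"
  shows "(\<exists>B. locally_equivalent V A B \<and>
            (\<exists>v\<in>V. \<exists>w\<in>V. v \<noteq> w \<and> \<not> adjacent B v w \<and>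
               degree B v = k1 - 1 \<and> degree B w = k2 - 1 \<and>
               \<not> (\<exists>u. adjacent B v u \<and> adjacent B w u)))
     \<longleftrightarrow>
     (\<exists>T. transversal V T \<and>
        (\<exists>C1 C2. transverse_circuit V A T C1 \<and> transverse_circuit V A T C2 \<and>
           C1 \<inter> C2 = {} \<and> card C1 = k1 \<and> card C2 = k2 \<and>
           (\<forall>C. transverse_circuit V A T C \<and> C \<subseteq> C1 \<union> C2 \<longrightarrow> C = C1 \<or> C = C2)))"
  unfolding RHS_iff good_def[symmetric]
proof
  assume "\<exists>B. locally_equivalent V A B \<and> good V B k1 k2"
  then obtain B where B: "locally_equivalent V A B" "good V B k1 k2" by blast
  have "looped_simple_graph V B \<and> ((\<exists>t X1 X2. data V A t k1 k2 X1 X2) \<longleftrightarrow> (\<exists>t X1 X2. data V B t k1 k2 X1 X2))"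
    by (rule loceq_P2[OF B(1) assms(1)])
  then show "\<exists>t X1 X2. data V A t k1 k2 X1 X2" using good_data[OF _ assms(2,3) B(2)] by blast
next
  assume "\<exists>t X1 X2. data V A t k1 k2 X1 X2"
  then obtain t X1 X2 where d: "data V A t k1 k2 X1 X2" by blast
  have fV: "finite V" using assms(1) by (simp add: looped_simple_graph_def)
  have c: "circ V A t X1" "circ V A t X2" using d by (auto simp: data_def)
  obtain v1 where v1: "v1 \<in> X1" "t v1 \<noteq> Phi" using nonphi[OF fV c(1)] by blast
  obtain v2 where v2: "v2 \<in> X2" "t v2 \<noteq> Phi" using nonphi[OF fV c(2)] by blast
  show "\<exists>B. locally_equivalent V A B \<and> good V B k1 k2"
    by (rule algo[OF assms(1) d v1(1) v2(1) v1(2) v2(2)])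
qed
end
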